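(* Let $m\ge1$, $\boldsymbol\gamma=(\gamma_1,\ldots,\gamma_m)\in\mathbb{N}^m$, and let $f_1,\ldots,f_{m+1}$ be multiplicative arithmetic functions. Then the function $S^{\boldsymbol\gamma}_{f_1,\ldots,f_{m+1}}$ of $m+1$ variables is multiplicative.
   Context: An arithmetic function is a map $f:\mathbb{N}\to\mathbb{C}$, with $f(x)=0$ for $x\notin\mathbb{N}$. It is multiplicative if $f(ab)=f(a)f(b)$ whenever $\gcd(a,b)=1$. The multiple Ramanujan sum is \[ S^{\boldsymbol\gamma}_{f_1,\ldots,f_{m+1}}(n_1,\ldots,n_{m+1}):=\sum_{\substack{(d_1,\ldots,d_m)\in\mathbb{N}^m\\ d_j^{\gamma_j}\mid\gcd(n_1,\ldots,n_{j+1})\ (1\le j\le m)}} f_1\Bigl(\frac{n_1}{d_1^{\gamma_1}}\Bigr)f_2\Bigl(\frac{d_1^{\gamma_1}}{d_2^{\gamma_2}}\Bigr)\cdots f_m\Bigl(\frac{d_{m-1}^{\gamma_{m-1}}}{d_m^{\gamma_m}}\Bigr)f_{m+1}\bigl(d_m^{\gamma_m}\bigr). \] A function $F:\mathbb{N}^k\to\mathbb{C}$ is called multiplicative if $F(m_1n_1,\ldots,m_kn_k)=F(m_1,\ldots,m_k)F(n_1,\ldots,n_k)$ for all $(m_1,\ldots,m_k),(n_1,\ldots,n_k)\in\mathbb{N}^k$ that are relatively prime, i.e. $\gcd(m_1\cdots m_k,\,n_1\cdots n_k)=1$. *)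

theory Defs
  imports Complex_Main "HOL-Library.FuncSet"
begin

text \<open>Arithmetic functions are modelled as maps nat to complex; only values at
positive arguments matter. Multiplicativity as in the paper.\<close>
definition multiplicative_arith :: "(nat \<Rightarrow> complex) \<Rightarrow> bool" where
  "multiplicative_arith f \<longleftrightarrow>
     (\<forall>a b. a > 0 \<longrightarrow> b > 0 \<longrightarrow> coprime a b \<longrightarrow> f (a * b) = f a * f b)"

text \<open>f evaluated at the rational a/b, with the convention f(x) = 0 for x not in N
(for positive a, b).\<close>
definition arith_at_quot :: "(nat \<Rightarrow> complex) \<Rightarrow> nat \<Rightarrow> nat \<Rightarrow> complex" where
  "arith_at_quot f a b = (if b dvd a then f (a div b) else 0)"

text \<open>Multiplicativity of a function of k variables; a tuple in N^k is a function
nat to nat considered on the indices 1..k.\<close>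
definition multiplicative_multi :: "nat \<Rightarrow> ((nat \<Rightarrow> nat) \<Rightarrow> complex) \<Rightarrow> bool" where
  "multiplicative_multi k F \<longleftrightarrow>
     (\<forall>a b. (\<forall>i\<in>{1..k}. a i > 0 \<and> b i > 0) \<longrightarrow>
        coprime (\<Prod>i\<in>{1..k}. a i) (\<Prod>i\<in>{1..k}. b i) \<longrightarrow>
        F (\<lambda>i. a i * b i) = F a * F b)"

text \<open>The multiple Ramanujan sum. Parameters: m, gamma (indices 1..m),
f (indices 1..m+1), n (indices 1..m+1). Tuples d in N^m are extensional
functions on {1..m}.\<close>
definition multiple_ramanujan_sum ::
  "nat \<Rightarrow> (nat \<Rightarrow> nat) \<Rightarrow> (nat \<Rightarrow> nat \<Rightarrow> complex) \<Rightarrow> (nat \<Rightarrow> nat) \<Rightarrow> complex" where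
  "multiple_ramanujan_sum m \<gamma> f n =
     (\<Sum>d\<in>(\<Pi>\<^sub>E j\<in>{1..m}. {e. e > 0 \<and> e ^ \<gamma> j dvd Gcd (n ` {1..j+1})}).
        arith_at_quot (f 1) (n 1) (d 1 ^ \<gamma> 1)
        * (\<Prod>j\<in>{2..m}. arith_at_quot (f j) (d (j - 1) ^ \<gamma> (j - 1)) (d j ^ \<gamma> j))
        * f (m + 1) (d m ^ \<gamma> m))"

end

theory Submission
  imports Defs
begin

lemma gone: fixes x y A :: nat assumes "x dvd A" "coprime y A" shows "gcd (x*y) A = x"
  by (metis assms(1,2) coprime_commute gcd_mult_left_right_cancel gcd_nat.orderE)

lemma sep: fixes x y A B :: nat assumes "coprime A B" "x dvd A^k" "y dvd B^l" shows "coprime x y"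
  by (meson assms(1,2,3) coprime_divisors coprime_power_left_iff coprime_power_right_iff)

lemma gsplit: fixes x A B :: nat assumes "coprime A B" "x dvd A*B" shows "gcd x A * gcd x B = x"
proof -
  obtain u v where uv: "x = u * v" "u dvd A" "v dvd B" using division_decomp[OF assms(2)] by blast
  have c1: "coprime v A" using sep[OF assms(1), of u 1 v 1] uv
    by (metis assms(1) coprime_commute coprime_divisors dvd_refl)
  have c2: "coprime u B" using uv assms(1) by (metis coprime_divisors dvd_refl)
  have "gcd x A = u" using gone[OF uv(2) c1] uv(1) by simp
  moreover have "gcd x B = v" using gone[OF uv(3) c2] uv(1) by (simp add: mult.commute)
  ultimately show ?thesis using uv(1) by simp
qed

lemma aq_mult:
  fixes x1 x2 y1 y2 :: nat
  assumes f: "multiplicative_arith f"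
    and c: "coprime x1 x2" "coprime x1 y2" "coprime y1 x2" "coprime y1 y2"
    and p: "x1 > 0" "x2 > 0"
  shows "arith_at_quot f (x1*x2) (y1*y2) = arith_at_quot f x1 y1 * arith_at_quot f x2 y2"
proof (cases "y1 dvd x1 \<and> y2 dvd x2")
  case True
  then obtain u v where u: "x1 = y1 * u" and v: "x2 = y2 * v" by (auto elim!: dvdE)
  have y: "y1 > 0" "y2 > 0" using p u v by auto
  have up: "u > 0" "v > 0" using p u v by auto
  have cuv: "coprime u v" using c(1) u v by simp
  have "x1*x2 = (y1*y2)*(u*v)" using u v by simp
  hence "(x1*x2) div (y1*y2) = u*v" using y by simp
  moreover have "x1 div y1 = u" "x2 div y2 = v" using u v y by auto
  moreover have "f (u*v) = f u * f v" using f cuv up unfolding multiplicative_arith_def by blast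
  ultimately show ?thesis using True unfolding arith_at_quot_def
    by (simp add: mult_dvd_mono)
next
  case False
  have "\<not> (y1*y2) dvd (x1*x2)"
  proof
    assume h: "(y1*y2) dvd (x1*x2)"
    hence "y1 dvd x1*x2" by (meson dvd_mult_left)
    hence a: "y1 dvd x1" using c(3) by (simp add: coprime_dvd_mult_left_iff)
    have "y2 dvd x1*x2" using h by (meson dvd_mult_right)
    hence "y2 dvd x2" using c(2) by (metis coprime_commute coprime_dvd_mult_right_iff)
    thus False using a False by blast
  qed
  thus ?thesis using False unfolding arith_at_quot_def by auto
qed

lemma memD:
  "d \<in> (\<Pi>\<^sub>E j\<in>{1..m}. {e. e > 0 \<and> e ^ \<gamma> j dvd Gcd (n ` {1..j+1})}) \<longleftrightarrow>
   d \<in> extensional {1..m} \<and> (\<forall>j\<in>{1..m}. d j > 0 \<and> (\<forall>i\<in>{1..j+1}. d j ^ \<gamma> j dvd (n i::nat)))"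
  by (auto simp: PiE_iff dvd_Gcd_iff)

theorem proposition2p6:
  fixes m :: nat and \<gamma> :: "nat \<Rightarrow> nat" and f :: "nat \<Rightarrow> nat \<Rightarrow> complex"
  assumes "m \<ge> 1"
    and "\<forall>j\<in>{1..m}. \<gamma> j \<ge> 1"
    and "\<forall>j\<in>{1..m+1}. multiplicative_arith (f j)"
  shows "multiplicative_multi (m + 1) (multiple_ramanujan_sum m \<gamma> f)"
  unfolding multiplicative_multi_def
proof (intro allI impI)
  fix a b :: "nat \<Rightarrow> nat"
  assume pos: "\<forall>i\<in>{1..m+1}. a i > 0 \<and> b i > 0"
    and cop0: "coprime (\<Prod>i\<in>{1..m+1}. a i) (\<Prod>i\<in>{1..m+1}. b i)"
  define A where "A = (\<Prod>i\<in>{1..m+1}. a i)"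
  define B where "B = (\<Prod>i\<in>{1..m+1}. b i)"
  have cop: "coprime A B" using cop0 A_def B_def by simp
  have aA: "a i dvd A" if "i \<in> {1..m+1}" for i unfolding A_def using that by (intro dvd_prodI) auto
  have bB: "b i dvd B" if "i \<in> {1..m+1}" for i unfolding B_def using that by (intro dvd_prodI) auto
  have Apos: "A > 0" unfolding A_def using pos by (auto intro: prod_pos)
  have Bpos: "B > 0" unfolding B_def using pos by (auto intro: prod_pos)
  define ab where "ab = (\<lambda>i. a i * b i)"
  define D where "D = (\<lambda>n::nat\<Rightarrow>nat. (\<Pi>\<^sub>E j\<in>{1..m}. {e. e > 0 \<and> e ^ \<gamma> j dvd Gcd (n ` {1..j+1})}))"
  define T where "T = (\<lambda>(n::nat\<Rightarrow>nat) (d::nat\<Rightarrow>nat).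
        arith_at_quot (f 1) (n 1) (d 1 ^ \<gamma> 1)
        * (\<Prod>j\<in>{2..m}. arith_at_quot (f j) (d (j - 1) ^ \<gamma> (j - 1)) (d j ^ \<gamma> j))
        * f (m + 1) (d m ^ \<gamma> m))"
  have S: "multiple_ramanujan_sum m \<gamma> f n = sum (T n) (D n)" for n
    unfolding multiple_ramanujan_sum_def T_def D_def by simp
  have gam: "\<gamma> j \<ge> 1" if "j \<in> {1..m}" for j using assms(2) that by blast
  have memd: "d \<in> D n \<longleftrightarrow> d \<in> extensional {1..m} \<and> (\<forall>j\<in>{1..m}. d j > 0 \<and> (\<forall>i\<in>{1..j+1}. d j ^ \<gamma> j dvd n i))"
    for d n unfolding D_def by (rule memD)
  have dvd1: "d j dvd n 1" if "d \<in> D n" "j \<in> {1..m}" for d n j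
  proof -
    have "d j ^ \<gamma> j dvd n 1" using that memd by auto
    moreover have "d j dvd d j ^ \<gamma> j" using gam[OF that(2)] by (simp add: dvd_power)
    ultimately show ?thesis by (rule dvd_trans[rotated])
  qed
  have dA: "d j dvd A" if "d \<in> D a" "j \<in> {1..m}" for d j
    using dvd1[OF that] aA[of 1] dvd_trans by auto
  have dB: "d j dvd B" if "d \<in> D b" "j \<in> {1..m}" for d j
    using dvd1[OF that] bB[of 1] dvd_trans by auto
  define h where "h = (\<lambda>(d1::nat\<Rightarrow>nat, d2::nat\<Rightarrow>nat). (\<lambda>j\<in>{1..m}. d1 j * d2 j))"
  define h' where "h' = (\<lambda>d::nat\<Rightarrow>nat. ((\<lambda>j\<in>{1..m}. gcd (d j) A), (\<lambda>j\<in>{1..m}. gcd (d j) B)))"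
  have bij: "bij_betw h (D a \<times> D b) (D ab)"
  proof (rule bij_betw_byWitness[where f' = h'])
    show "\<forall>p\<in>D a \<times> D b. h' (h p) = p"
    proof
      fix p assume p: "p \<in> D a \<times> D b"
      then obtain d1 d2 where pe: "p = (d1, d2)" and d1: "d1 \<in> D a" and d2: "d2 \<in> D b" by auto
      have e1: "d1 \<in> extensional {1..m}" and e2: "d2 \<in> extensional {1..m}" using d1 d2 memd by auto
      have "(\<lambda>j\<in>{1..m}. gcd (d1 j * d2 j) A) = d1"
      proof (rule extensionalityI[OF _ e1])
        show "(\<lambda>j\<in>{1..m}. gcd (d1 j * d2 j) A) \<in> extensional {1..m}" by simp
        fix j assume j: "j \<in> {1..m}"
        have "coprime (d2 j) A" using sep[OF cop, of "d2 j" 1 "A" 1] dB[OF d2 j]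
          by (metis coprime_commute power_one_right sep[OF cop] dvd_refl)
        thus "(\<lambda>j\<in>{1..m}. gcd (d1 j * d2 j) A) j = d1 j" using j gone[OF dA[OF d1 j]] by simp
      qed
      moreover have "(\<lambda>j\<in>{1..m}. gcd (d1 j * d2 j) B) = d2"
      proof (rule extensionalityI[OF _ e2])
        show "(\<lambda>j\<in>{1..m}. gcd (d1 j * d2 j) B) \<in> extensional {1..m}" by simp
        fix j assume j: "j \<in> {1..m}"
        have "coprime (d1 j) B" using dA[OF d1 j]
          by (metis power_one_right sep[OF cop] dvd_refl)
        thus "(\<lambda>j\<in>{1..m}. gcd (d1 j * d2 j) B) j = d2 j" using j gone[OF dB[OF d2 j]]
          by (simp add: mult.commute)
      qed
      moreover have "h' (h p) = ((\<lambda>j\<in>{1..m}. gcd (d1 j * d2 j) A), (\<lambda>j\<in>{1..m}. gcd (d1 j * d2 j) B))"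
        unfolding h_def h'_def pe by (auto intro!: restrict_ext)
      ultimately show "h' (h p) = p" using pe by simp
    qed
    show "\<forall>d\<in>D ab. h (h' d) = d"
    proof
      fix d assume d: "d \<in> D ab"
      have e: "d \<in> extensional {1..m}" using d memd by auto
      have hh: "h (h' d) = (\<lambda>j\<in>{1..m}. gcd (d j) A * gcd (d j) B)"
        unfolding h_def h'_def by (auto intro!: restrict_ext)
      show "h (h' d) = d" unfolding hh
      proof (rule extensionalityI[OF _ e])
        show "(\<lambda>j\<in>{1..m}. gcd (d j) A * gcd (d j) B) \<in> extensional {1..m}" by simp
        fix j assume j: "j \<in> {1..m}"
        have "d j dvd ab 1" using dvd1[OF d j] .
        hence "d j dvd A * B" unfolding ab_def using aA[of 1] bB[of 1] mult_dvd_mono dvd_trans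
          by (metis atLeastAtMost_iff le_add2 order_refl)
        thus "(\<lambda>j\<in>{1..m}. gcd (d j) A * gcd (d j) B) j = d j" using j gsplit[OF cop] by simp
      qed
    qed
    show "h ` (D a \<times> D b) \<subseteq> D ab"
    proof safe
      fix d1 d2 assume d1: "d1 \<in> D a" and d2: "d2 \<in> D b"
      show "h (d1, d2) \<in> D ab" unfolding memd h_def ab_def
        using d1 d2 memd by (auto simp: power_mult_distrib intro!: mult_dvd_mono)
    qed
    show "h' ` D ab \<subseteq> D a \<times> D b"
    proof (rule image_subsetI)
      fix d assume d: "d \<in> D ab"
      have dd: "\<forall>j\<in>{1..m}. d j > 0 \<and> (\<forall>i\<in>{1..j+1}. d j ^ \<gamma> j dvd a i * b i)"
        using d memd ab_def by auto
      have "(\<lambda>j\<in>{1..m}. gcd (d j) A) \<in> D a" unfolding memd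
      proof (intro conjI ballI)
        show "(\<lambda>j\<in>{1..m}. gcd (d j) A) \<in> extensional {1..m}" by simp
      next
        fix j assume j: "j \<in> {1..m}"
        show "0 < (\<lambda>j\<in>{1..m}. gcd (d j) A) j" using Apos j by simp
      next
        fix j i assume j: "j \<in> {1..m}" and i: "i \<in> {1..j+1}"
        have rj: "(\<lambda>j\<in>{1..m}. gcd (d j) A) j = gcd (d j) A" using j by simp
        show "(\<lambda>j\<in>{1..m}. gcd (d j) A) j ^ \<gamma> j dvd a i" unfolding rj
        proof -
        have "gcd (d j) A ^ \<gamma> j dvd d j ^ \<gamma> j" by (simp add: dvd_power_same gcd_dvd2 gcd_dvd1) 
        hence "gcd (d j) A ^ \<gamma> j dvd a i * b i" using dd j i dvd_trans by blast
        moreover have "coprime (gcd (d j) A ^ \<gamma> j) (b i)"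
          using sep[OF cop, of "gcd (d j) A ^ \<gamma> j" "\<gamma> j" "b i" 1] bB[of i] i j
          by (auto simp: dvd_power_same gcd_dvd2)
        ultimately show "gcd (d j) A ^ \<gamma> j dvd a i" by (simp add: coprime_dvd_mult_left_iff)
        qed
      qed
      moreover have "(\<lambda>j\<in>{1..m}. gcd (d j) B) \<in> D b" unfolding memd
      proof (intro conjI ballI)
        show "(\<lambda>j\<in>{1..m}. gcd (d j) B) \<in> extensional {1..m}" by simp
      next
        fix j assume j: "j \<in> {1..m}"
        show "0 < (\<lambda>j\<in>{1..m}. gcd (d j) B) j" using Bpos j by simp
      next
        fix j i assume j: "j \<in> {1..m}" and i: "i \<in> {1..j+1}"
        have rj: "(\<lambda>j\<in>{1..m}. gcd (d j) B) j = gcd (d j) B" using j by simp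
        show "(\<lambda>j\<in>{1..m}. gcd (d j) B) j ^ \<gamma> j dvd b i" unfolding rj
        proof -
        have "gcd (d j) B ^ \<gamma> j dvd d j ^ \<gamma> j" by (simp add: dvd_power_same gcd_dvd2 gcd_dvd1) 
        hence "gcd (d j) B ^ \<gamma> j dvd a i * b i" using dd j i dvd_trans by blast
        moreover have "coprime (gcd (d j) B ^ \<gamma> j) (a i)"
          using sep[OF cop, of "a i" 1 "gcd (d j) B ^ \<gamma> j" "\<gamma> j"] aA[of i] i j
          by (auto simp: dvd_power_same gcd_dvd2 coprime_commute)
        ultimately show "gcd (d j) B ^ \<gamma> j dvd b i" by (simp add: coprime_dvd_mult_right_iff)
        qed
      qed
      ultimately show "h' d \<in> D a \<times> D b" unfolding h'_def by simp
    qed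
  qed
  have Tm: "T ab (h p) = T a (fst p) * T b (snd p)" if p: "p \<in> D a \<times> D b" for p
  proof -
    obtain d1 d2 where pe: "p = (d1, d2)" and d1: "d1 \<in> D a" and d2: "d2 \<in> D b" using p by auto
    have hj: "h p j = d1 j * d2 j" if "j \<in> {1..m}" for j using that unfolding h_def pe by simp
    have pa: "d1 j ^ \<gamma> j dvd A ^ \<gamma> j" if "j \<in> {1..m}" for j using dA[OF d1 that] by (rule dvd_power_same)
    have pb: "d2 j ^ \<gamma> j dvd B ^ \<gamma> j" if "j \<in> {1..m}" for j using dB[OF d2 that] by (rule dvd_power_same)
    have pos1: "d1 j ^ \<gamma> j > 0" if "j \<in> {1..m}" for j using d1 that memd by auto
    have pos2: "d2 j ^ \<gamma> j > 0" if "j \<in> {1..m}" for j using d2 that memd by auto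
    have a1: "a 1 dvd A ^ 1" using aA[of 1] by simp
    have b1: "b 1 dvd B ^ 1" using bB[of 1] by simp
    have ab1: "a 1 > 0" "b 1 > 0" using pos by auto
    have cp: "coprime x y" if "x dvd A ^ k" "y dvd B ^ l" for x y k l using sep[OF cop that] .
    have fm: "multiplicative_arith (f j)" if "j \<in> {1..m+1}" for j using assms(3) that by blast
    have m1: "1 \<in> {1..m}" "m \<in> {1..m}" using assms(1) by auto
    have F1: "arith_at_quot (f 1) (ab 1) (h p 1 ^ \<gamma> 1) =
       arith_at_quot (f 1) (a 1) (d1 1 ^ \<gamma> 1) * arith_at_quot (f 1) (b 1) (d2 1 ^ \<gamma> 1)"
      unfolding ab_def hj[OF m1(1)] power_mult_distrib
      by (rule aq_mult[OF fm cp[OF a1 b1] cp[OF a1 pb[OF m1(1)]] cp[OF pa[OF m1(1)] b1]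
            cp[OF pa[OF m1(1)] pb[OF m1(1)]] ab1]) (use m1 in auto)
    have FM: "arith_at_quot (f j) (h p (j - 1) ^ \<gamma> (j - 1)) (h p j ^ \<gamma> j) =
       arith_at_quot (f j) (d1 (j - 1) ^ \<gamma> (j - 1)) (d1 j ^ \<gamma> j) *
       arith_at_quot (f j) (d2 (j - 1) ^ \<gamma> (j - 1)) (d2 j ^ \<gamma> j)" if j: "j \<in> {2..m}" for j
    proof -
      have j1: "j - 1 \<in> {1..m}" and j2: "j \<in> {1..m}" and j3: "j \<in> {1..m+1}" using j by auto
      show ?thesis
        unfolding hj[OF j1] hj[OF j2] power_mult_distrib
        by (rule aq_mult[OF fm[OF j3] cp[OF pa[OF j1] pb[OF j1]] cp[OF pa[OF j1] pb[OF j2]]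
            cp[OF pa[OF j2] pb[OF j1]] cp[OF pa[OF j2] pb[OF j2]] pos1[OF j1] pos2[OF j1]])
    qed
    have FL: "f (m + 1) (h p m ^ \<gamma> m) = f (m + 1) (d1 m ^ \<gamma> m) * f (m + 1) (d2 m ^ \<gamma> m)"
    proof -
      have "coprime (d1 m ^ \<gamma> m) (d2 m ^ \<gamma> m)" using cp pa[OF m1(2)] pb[OF m1(2)] by blast
      moreover have "multiplicative_arith (f (m+1))" using fm by simp
      ultimately show ?thesis unfolding hj[OF m1(2)] power_mult_distrib multiplicative_arith_def
        using pos1[OF m1(2)] pos2[OF m1(2)] by blast
    qed
    have PM: "(\<Prod>j\<in>{2..m}. arith_at_quot (f j) (h p (j - 1) ^ \<gamma> (j - 1)) (h p j ^ \<gamma> j)) =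
       (\<Prod>j\<in>{2..m}. arith_at_quot (f j) (d1 (j - 1) ^ \<gamma> (j - 1)) (d1 j ^ \<gamma> j)) *
          (\<Prod>j\<in>{2..m}. arith_at_quot (f j) (d2 (j - 1) ^ \<gamma> (j - 1)) (d2 j ^ \<gamma> j))"
      unfolding prod.distrib[symmetric] by (rule prod.cong[OF refl FM])
    have "T ab (h p) = (arith_at_quot (f 1) (a 1) (d1 1 ^ \<gamma> 1) * arith_at_quot (f 1) (b 1) (d2 1 ^ \<gamma> 1))
       * ((\<Prod>j\<in>{2..m}. arith_at_quot (f j) (d1 (j - 1) ^ \<gamma> (j - 1)) (d1 j ^ \<gamma> j)) *
          (\<Prod>j\<in>{2..m}. arith_at_quot (f j) (d2 (j - 1) ^ \<gamma> (j - 1)) (d2 j ^ \<gamma> j)))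
       * (f (m + 1) (d1 m ^ \<gamma> m) * f (m + 1) (d2 m ^ \<gamma> m))"
      unfolding T_def F1 FL PM by simp
    also have "\<dots> = T a d1 * T b d2" unfolding T_def by (simp add: mult_ac)
    finally show ?thesis using pe by simp
  qed
  have "sum (T ab) (D ab) = (\<Sum>p\<in>D a \<times> D b. T ab (h p))"
    using sum.reindex_bij_betw[OF bij, of "T ab"] by simp
  also have "\<dots> = (\<Sum>p\<in>D a \<times> D b. T a (fst p) * T b (snd p))"
    using Tm by (rule sum.cong[OF refl])
  also have "\<dots> = sum (T a) (D a) * sum (T b) (D b)"
    by (simp add: sum_product sum.cartesian_product case_prod_beta)
  finally show "multiple_ramanujan_sum m \<gamma> f (\<lambda>i. a i * b i) =
      multiple_ramanujan_sum m \<gamma> f a * multiple_ramanujan_sum m \<gamma> f b"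
    unfolding S ab_def .
qed

end
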